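(* Let $f,g\in Sym$ be symmetric functions of degree at most a positive integer $n$. If $f[\Xi_\mu]=g[\Xi_\mu]$ for all partitions $\mu$ with $|\mu|\ge n$, then $f=g$ in $Sym$.
   Context: $Sym=\mathbb{Q}[p_1,p_2,\ldots]$ graded by $\deg p_k=k$. For $f\in Sym$ and a partition $\mu$, $f[\Xi_\mu]$ denotes $f$ evaluated at the multiset of eigenvalues of a permutation matrix of cycle type $\mu$, i.e. substituting $p_k\mapsto\sum_{d\mid k}d\,m_d(\mu)$, with $m_d(\mu)$ the number of parts of $\mu$ equal to $d$. *)

theory Defs
  imports Complex_Main "HOL-Library.Multiset" "HOL-Library.Poly_Mapping"
begin

text \<open>Sym = Q[p_1,p_2,...] is represented in its power-sum basis: an element is a finitely
supported map from multisets lambda of positive integers (the monomial p_lambda = prod p_{lambda_i})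
to rational coefficients.\<close>

type_synonym sym = "nat multiset \<Rightarrow>\<^sub>0 rat"

definition sym_elem :: "sym \<Rightarrow> bool" where
  "sym_elem f \<longleftrightarrow> (\<forall>l \<in> Poly_Mapping.keys f. 0 \<notin># l)"

definition sym_deg_le :: "sym \<Rightarrow> nat \<Rightarrow> bool" where
  "sym_deg_le f n \<longleftrightarrow> (\<forall>l \<in> Poly_Mapping.keys f. sum_mset l \<le> n)"

text \<open>Partitions: multisets of positive integers; |mu| = sum_mset mu, m_d(mu) = count mu d.\<close>
definition is_partition :: "nat multiset \<Rightarrow> bool" where
  "is_partition mu \<longleftrightarrow> 0 \<notin># mu"

text \<open>p_k[Xi_mu] = sum over d dividing k of d * m_d(mu).\<close>
definition pk_eval :: "nat \<Rightarrow> nat multiset \<Rightarrow> rat" where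
  "pk_eval k mu = (\<Sum>d \<in> {d. d dvd k}. of_nat d * of_nat (count mu d))"

definition sym_eval :: "sym \<Rightarrow> nat multiset \<Rightarrow> rat" where
  "sym_eval f mu = (\<Sum>l \<in> Poly_Mapping.keys f. Poly_Mapping.lookup f l * prod_mset (image_mset (\<lambda>k. pk_eval k mu) l))"

end

theory Submission imports Defs "HOL-Computational_Algebra.Polynomial" begin

definition PP :: "nat multiset \<Rightarrow> nat multiset \<Rightarrow> rat" where
  "PP l mu = prod_mset (image_mset (\<lambda>k. pk_eval k mu) l)"

lemma pk_add: "pk_eval k (mu + nu) = pk_eval k mu + pk_eval k nu"
  by (simp add: pk_eval_def sum.distrib algebra_simps)

lemma pk_rep: assumes "0 < k" shows
  "pk_eval k (replicate_mset t N) = (if N dvd k then of_nat N * of_nat t else 0)"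
proof -
  have fin: "finite {d. d dvd k}" using assms by simp
  have "pk_eval k (replicate_mset t N) = (\<Sum>d\<in>{d. d dvd k}. if d = N then of_nat N * of_nat t else 0)"
    unfolding pk_eval_def by (rule sum.cong) auto
  also have "\<dots> = (if N dvd k then of_nat N * of_nat t else 0)"
    using fin by (simp add: sum.delta')
  finally show ?thesis .
qed

lemma pk_small: assumes "0 < k" "k < N"
  shows "pk_eval k (mu + replicate_mset t N) = pk_eval k mu"
proof -
  have "\<not> N dvd k" using assms by (auto dest: dvd_imp_le)
  thus ?thesis using assms by (simp add: pk_add pk_rep)
qed

lemma PP_rep: "PP (l + replicate_mset j N) mu = PP l mu * pk_eval N mu ^ j"
  by (simp add: PP_def)

lemma PP_small: assumes "\<forall>k\<in>#l. 0 < k \<and> k < N"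
  shows "PP l (mu + replicate_mset t N) = PP l mu"
  unfolding PP_def
  by (rule arg_cong[where f=prod_mset], rule image_mset_cong) (use assms pk_small in auto)

lemma diff_rep: "count l N = j \<Longrightarrow> l - replicate_mset j N + replicate_mset j N = l"
  by (auto simp: multiset_eq_iff)

lemma empty_case:
  assumes "finite S" "\<forall>l\<in>S. l = {#}" "(\<Sum>l\<in>S. c l * PP l {#}) = 0"
  shows "\<forall>l\<in>S. c l = 0"
proof (cases "S = {}")
  case False
  then have "S = {{#}}" using assms(2) by auto
  then show ?thesis using assms(3) by (simp add: PP_def)
qed simp

lemma poly_zero_coeffs:
  fixes b :: "nat \<Rightarrow> rat"
  assumes "finite J" "infinite Y" "\<forall>y\<in>Y. (\<Sum>j\<in>J. b j * y ^ j) = 0" "j \<in> J"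
  shows "b j = 0"
proof -
  define p where "p = (\<Sum>i\<in>J. monom (b i) i)"
  have "\<forall>y\<in>Y. poly p y = 0" using assms(3) by (simp add: p_def poly_sum poly_monom)
  then have "Y \<subseteq> {x. poly p x = 0}" by auto
  then have "p = 0" using assms(2) poly_roots_finite finite_subset by blast
  then have "coeff p j = 0" by simp
  moreover have "coeff p j = b j" using assms(1,4)
    by (simp add: p_def coeff_sum coeff_monom sum.delta)
  ultimately show ?thesis by simp
qed

lemma main:
  "finite S \<Longrightarrow> (\<forall>l\<in>S. \<forall>k\<in>#l. 0 < k \<and> k < N) \<Longrightarrow>
   (\<forall>mu. (\<forall>d\<in>#mu. 0 < d \<and> d < N) \<longrightarrow> (\<Sum>l\<in>S. c l * PP l mu) = 0) \<Longrightarrow>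
   \<forall>l\<in>S. c l = 0"
proof (induction N arbitrary: S c)
  case 0
  have E: "\<forall>l\<in>S. l = {#}"
  proof (rule ballI, rule ccontr)
    fix l assume l: "l \<in> S" "l \<noteq> {#}"
    then obtain k where "k \<in># l" by (meson multiset_nonemptyE)
    then show False using "0.prems"(2) l by blast
  qed
  have Z: "(\<Sum>l\<in>S. c l * PP l {#}) = 0" using "0.prems"(3)[rule_format, of "{#}"] by simp
  show ?case by (rule empty_case[OF "0.prems"(1) E Z])
next
  case (Suc N)
  show ?case
  proof (cases "N = 0")
    case True
    have E: "\<forall>l\<in>S. l = {#}"
    proof (rule ballI, rule ccontr)
      fix l assume l: "l \<in> S" "l \<noteq> {#}"
      then obtain k where "k \<in># l" by (meson multiset_nonemptyE)
      then show False using Suc.prems(2) l True by fastforce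
    qed
    have Z: "(\<Sum>l\<in>S. c l * PP l {#}) = 0" using Suc.prems(3)[rule_format, of "{#}"] by simp
    show ?thesis by (rule empty_case[OF Suc.prems(1) E Z])
  next
    case Npos: False
    define J where "J = (\<lambda>l. count l N) ` S"
    define b where "b j mu = (\<Sum>l\<in>{l\<in>S. count l N = j}. c l * PP (l - replicate_mset j N) mu)" for j mu
    have finJ: "finite J" using Suc.prems(1) by (simp add: J_def)
    have claim1: "(\<Sum>j\<in>J. b j mu * (pk_eval N mu + of_nat N * of_nat t) ^ j) = 0"
      if mu: "\<forall>d\<in>#mu. 0 < d \<and> d < N" for mu t
    proof -
      define mu' where "mu' = mu + replicate_mset t N"
      have "\<forall>d\<in>#mu'. 0 < d \<and> d < Suc N" using mu Npos by (auto simp: mu'_def)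
      then have h0: "(\<Sum>l\<in>S. c l * PP l mu') = 0" using Suc.prems(3) by blast
      have pkN: "pk_eval N mu' = pk_eval N mu + of_nat N * of_nat t"
        using Npos by (simp add: mu'_def pk_add pk_rep)
      have "(\<Sum>l\<in>S. c l * PP l mu') = (\<Sum>j\<in>J. \<Sum>l\<in>{l\<in>S. count l N = j}. c l * PP l mu')"
        using sum.group[of S J "\<lambda>l. count l N" "\<lambda>l. c l * PP l mu'"] Suc.prems(1) finJ
        by (simp add: J_def)
      also have "\<dots> = (\<Sum>j\<in>J. b j mu * (pk_eval N mu + of_nat N * of_nat t) ^ j)"
        unfolding b_def sum_distrib_right
      proof (rule sum.cong[OF refl], rule sum.cong[OF refl])
        fix j l assume l: "l \<in> {l\<in>S. count l N = j}"
        have parts: "\<forall>k\<in>#l - replicate_mset j N. 0 < k \<and> k < N"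
        proof
          fix k assume k: "k \<in># l - replicate_mset j N"
          then have "k \<in># l" by (rule in_diffD)
          moreover have "k \<noteq> N"
          proof -
            have "count (l - replicate_mset j N) N = 0" using l by simp
            then show ?thesis using k by (metis not_in_iff)
          qed
          ultimately show "0 < k \<and> k < N" using Suc.prems(2) l by fastforce
        qed
        have "PP l mu' = PP (l - replicate_mset j N + replicate_mset j N) mu'"
          using l diff_rep[of l N j] by simp
        also have "\<dots> = PP (l - replicate_mset j N) mu * (pk_eval N mu + of_nat N * of_nat t) ^ j"
          using PP_rep PP_small[OF parts] pkN by (simp add: mu'_def)
        finally show "c l * PP l mu' = c l * PP (l - replicate_mset j N) mu * (pk_eval N mu + of_nat N * of_nat t) ^ j"
          by simp
      qed
      finally show ?thesis using h0 by simp
    qed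
    have claim2: "b j mu = 0" if mu: "\<forall>d\<in>#mu. 0 < d \<and> d < N" and j: "j \<in> J" for mu j
    proof (rule poly_zero_coeffs[OF finJ _ _ j])
      let ?Y = "range (\<lambda>t::nat. pk_eval N mu + of_nat N * of_nat t)"
      have "inj (\<lambda>t::nat. pk_eval N mu + of_nat N * of_nat t)" using Npos by (auto simp: inj_def)
      then show "infinite ?Y" by (simp add: finite_image_iff)
      show "\<forall>y\<in>?Y. (\<Sum>j\<in>J. b j mu * y ^ j) = 0" using claim1[OF mu] by auto
    qed
    show ?thesis
    proof
      fix l0 assume l0: "l0 \<in> S"
      define j0 where "j0 = count l0 N"
      have j0J: "j0 \<in> J" using l0 by (simp add: J_def j0_def)
      define A where "A = {l\<in>S. count l N = j0}"
      define h where "h l = l - replicate_mset j0 N" for l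
      have injh: "inj_on h A"
      proof (rule inj_onI)
        fix x y assume "x \<in> A" "y \<in> A" "h x = h y"
        then show "x = y" unfolding A_def h_def using diff_rep
          by (metis (mono_tags, lifting) mem_Collect_eq)
      qed
      have "\<forall>l'\<in>h ` A. (\<lambda>l'. c (l' + replicate_mset j0 N)) l' = 0"
      proof (rule Suc.IH)
        show "finite (h ` A)" using Suc.prems(1) by (simp add: A_def)
        show "\<forall>l\<in>h ` A. \<forall>k\<in>#l. 0 < k \<and> k < N"
        proof (intro ballI)
          fix l' k assume "l' \<in> h ` A" "k \<in># l'"
          then obtain l where l: "l \<in> A" "k \<in># l - replicate_mset j0 N" by (auto simp: h_def)
          then have "k \<in># l" by (metis in_diffD)
          moreover have "k \<noteq> N"
          proof -
            have "count (l - replicate_mset j0 N) N = 0" using l by (simp add: A_def)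
            then show ?thesis using l(2) by (metis not_in_iff)
          qed
          ultimately show "0 < k \<and> k < N" using Suc.prems(2) l by (fastforce simp: A_def)
        qed
        show "\<forall>mu. (\<forall>d\<in>#mu. 0 < d \<and> d < N) \<longrightarrow>
            (\<Sum>l\<in>h ` A. c (l + replicate_mset j0 N) * PP l mu) = 0"
        proof (intro allI impI)
          fix mu assume mu: "\<forall>d\<in>#mu. 0 < d \<and> d < N"
          have "(\<Sum>l\<in>h ` A. c (l + replicate_mset j0 N) * PP l mu)
              = (\<Sum>l\<in>A. c (h l + replicate_mset j0 N) * PP (h l) mu)"
            by (simp add: sum.reindex[OF injh])
          also have "\<dots> = b j0 mu"
            unfolding b_def A_def h_def
            by (rule sum.cong) (auto simp: diff_rep)
          finally show "(\<Sum>l\<in>h ` A. c (l + replicate_mset j0 N) * PP l mu) = 0"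
            using claim2[OF mu j0J] by simp
        qed
      qed
      moreover have "l0 \<in> A" using l0 by (simp add: A_def j0_def)
      ultimately have "c (h l0 + replicate_mset j0 N) = 0" by blast
      then show "c l0 = 0" by (simp add: h_def diff_rep j0_def)
    qed
  qed
qed

lemma eval_ext:
  fixes f :: sym
  assumes "finite S" "Poly_Mapping.keys f \<subseteq> S"
    and parts: "\<forall>l\<in>S. \<forall>k\<in>#l. 0 < k \<and> k < N"
  shows "sym_eval f (mu + replicate_mset 1 N) = (\<Sum>l\<in>S. Poly_Mapping.lookup f l * PP l mu)"
proof -
  have "sym_eval f (mu + replicate_mset 1 N) = (\<Sum>l\<in>Poly_Mapping.keys f. Poly_Mapping.lookup f l * PP l mu)"
    unfolding sym_eval_def PP_def[symmetric]
  proof (rule sum.cong[OF refl])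
    fix l assume "l \<in> Poly_Mapping.keys f"
    then have "l \<in> S" using assms(2) by blast
    then show "Poly_Mapping.lookup f l * PP l (mu + replicate_mset 1 N) = Poly_Mapping.lookup f l * PP l mu"
      using PP_small[of l N mu 1] parts by simp
  qed
  also have "\<dots> = (\<Sum>l\<in>S. Poly_Mapping.lookup f l * PP l mu)"
    by (rule sum.mono_neutral_left[OF assms(1,2)]) (simp add: in_keys_iff)
  finally show ?thesis .
qed

theorem corollary56:
  fixes f g :: sym and n :: nat
  assumes "n > 0"
    and "sym_elem f" and "sym_elem g"
    and "sym_deg_le f n" and "sym_deg_le g n"
    and "\<forall>mu. is_partition mu \<and> sum_mset mu \<ge> n \<longrightarrow> sym_eval f mu = sym_eval g mu"
  shows "f = g"
proof -
  define S where "S = Poly_Mapping.keys f \<union> Poly_Mapping.keys g"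
  have finS: "finite S" by (simp add: S_def)
  define M where "M = Max (insert 0 (\<Union>l\<in>S. set_mset l))"
  define N where "N = Suc (n + M)"
  have finU: "finite (insert 0 (\<Union>l\<in>S. set_mset l))" using finS by simp
  have parts: "\<forall>l\<in>S. \<forall>k\<in>#l. 0 < k \<and> k < N"
  proof (intro ballI)
    fix l k assume l: "l \<in> S" and k: "k \<in># l"
    have "k \<in> insert 0 (\<Union>l\<in>S. set_mset l)" using l k by blast
    then have "k \<le> M" unfolding M_def by (rule Max_ge[OF finU])
    have "0 \<notin># l" using l assms(2,3) unfolding S_def sym_elem_def by blast
    then have "k \<noteq> 0" using k by metis
    note \<open>k \<le> M\<close>
    moreover note \<open>k \<noteq> 0\<close>
    ultimately show "0 < k \<and> k < N" by (simp add: N_def)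
  qed
  define c where "c l = Poly_Mapping.lookup f l - Poly_Mapping.lookup g l" for l
  have "\<forall>l\<in>S. c l = 0"
  proof (rule main[OF finS parts], intro allI impI)
    fix mu assume mu: "\<forall>d\<in>#mu. 0 < d \<and> d < N"
    define mu' where "mu' = mu + replicate_mset 1 N"
    have "is_partition mu'" using mu by (auto simp: is_partition_def mu'_def N_def)
    moreover have "sum_mset mu' \<ge> n" by (simp add: mu'_def N_def)
    ultimately have "sym_eval f mu' = sym_eval g mu'" using assms(6) by blast
    moreover have "sym_eval f mu' = (\<Sum>l\<in>S. Poly_Mapping.lookup f l * PP l mu)"
      unfolding mu'_def by (rule eval_ext[OF finS _ parts]) (auto simp: S_def)
    moreover have "sym_eval g mu' = (\<Sum>l\<in>S. Poly_Mapping.lookup g l * PP l mu)"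
      unfolding mu'_def by (rule eval_ext[OF finS _ parts]) (auto simp: S_def)
    ultimately show "(\<Sum>l\<in>S. c l * PP l mu) = 0"
      by (simp add: c_def left_diff_distrib sum_subtractf)
  qed
  show ?thesis
  proof (rule poly_mapping_eqI)
    fix l
    show "Poly_Mapping.lookup f l = Poly_Mapping.lookup g l"
    proof (cases "l \<in> S")
      case True then show ?thesis using \<open>\<forall>l\<in>S. c l = 0\<close> by (simp add: c_def)
    next
      case False then show ?thesis by (simp add: S_def in_keys_iff)
    qed
  qed
qed

end
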